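(* Let $\mathbb{C}$ be a regular category, $I$ a set, $\mathcal{J}=(I_j)_{j\in J}$ a family of subsets of $I$, and $(A_i)_{i\in I}$ a family of objects of $\mathbb{C}$ such that all products below exist. The following are equivalent: (i) $\prod_{i\in I}A_i$ has $\mathcal{J}$-fold subobject decompositions. (ii) For any monomorphism $s:S\to\prod_{i\in I}A_i$, the square with top arrow $(e_{I_j})_{j\in J}:S\to\prod_{j\in J}S_{I_j}$, left arrow $s$, right arrow $\prod_{j\in J}s_{I_j}:\prod_{j\in J}S_{I_j}\to\prod_{j\in J}\prod_{k\in I_j}A_k$ and bottom arrow $(\pi_{I_j})_{j\in J}:\prod_{i\in I}A_i\to\prod_{j\in J}\prod_{k\in I_j}A_k$ is a pullback, where $S\xrightarrow{e_{I_j}}S_{I_j}\xrightarrow{s_{I_j}}\prod_{k\in I_j}A_k$ is a regular epi–mono factorization of $\pi_{I_j}s$.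
   Context: A category is regular if it has finite limits and coequalizers of kernel pairs and regular epimorphisms are pullback-stable; every morphism factors as a regular epimorphism followed by a monomorphism, and the image of a subobject $S$ (represented by $s$) under a morphism $f$ is the subobject represented by the mono part of such a factorization of $fs$. For $K\subseteq I$, $\pi_K:\prod_{i\in I}A_i\to\prod_{k\in K}A_k$ is the canonical projection and the $K$-image $S_K$ of a subobject $S$ of $\prod_{i\in I}A_i$ is its image under $\pi_K$. The product $\prod_{i\in I}A_i$ has $\mathcal{J}$-fold subobject decompositions if for any two subobjects $S,T$ of $\prod_{i\in I}A_i$ with $S_{I_j}=T_{I_j}$ for all $j\in J$, we have $S=T$. *)

theory Defs
  imports Main
begin

text \<open>A category given by its set of objects, set of arrows, domain, codomain,
identities and composition; Comp C g f is the composite "g after f".\<close>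

record ('o, 'm) cat =
  Ob   :: "'o set"
  Ar   :: "'m set"
  Dom  :: "'m \<Rightarrow> 'o"
  Cod  :: "'m \<Rightarrow> 'o"
  Id   :: "'o \<Rightarrow> 'm"
  Comp :: "'m \<Rightarrow> 'm \<Rightarrow> 'm"

definition hom :: "('o, 'm) cat \<Rightarrow> 'o \<Rightarrow> 'o \<Rightarrow> 'm set" where
  "hom C a b = {f \<in> Ar C. Dom C f = a \<and> Cod C f = b}"

definition category :: "('o, 'm) cat \<Rightarrow> bool" where
  "category C \<longleftrightarrow>
     (\<forall>f \<in> Ar C. Dom C f \<in> Ob C \<and> Cod C f \<in> Ob C) \<and>
     (\<forall>a \<in> Ob C. Id C a \<in> hom C a a) \<and>
     (\<forall>a b c f g. f \<in> hom C a b \<and> g \<in> hom C b c \<longrightarrow> Comp C g f \<in> hom C a c) \<and>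
     (\<forall>a b f. f \<in> hom C a b \<longrightarrow> Comp C f (Id C a) = f \<and> Comp C (Id C b) f = f) \<and>
     (\<forall>a b c d f g h. f \<in> hom C a b \<and> g \<in> hom C b c \<and> h \<in> hom C c d \<longrightarrow>
        Comp C h (Comp C g f) = Comp C (Comp C h g) f)"

definition mono :: "('o, 'm) cat \<Rightarrow> 'm \<Rightarrow> bool" where
  "mono C m \<longleftrightarrow> m \<in> Ar C \<and>
     (\<forall>f g. f \<in> Ar C \<and> g \<in> Ar C \<and> Dom C f = Dom C g \<and> Cod C f = Dom C m \<and>
            Cod C g = Dom C m \<and> Comp C m f = Comp C m g \<longrightarrow> f = g)"

text \<open>The commutative square with top arrow a : X \<rightarrow> Y, left arrow s : X \<rightarrow> Z,
right arrow b : Y \<rightarrow> W and bottom arrow c : Z \<rightarrow> W is a pullback.\<close>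

definition is_pullback :: "('o, 'm) cat \<Rightarrow> 'm \<Rightarrow> 'm \<Rightarrow> 'm \<Rightarrow> 'm \<Rightarrow> bool" where
  "is_pullback C a s b c \<longleftrightarrow>
     a \<in> Ar C \<and> s \<in> Ar C \<and> b \<in> Ar C \<and> c \<in> Ar C \<and>
     Dom C a = Dom C s \<and> Cod C a = Dom C b \<and> Cod C s = Dom C c \<and> Cod C b = Cod C c \<and>
     Comp C b a = Comp C c s \<and>
     (\<forall>f g. f \<in> Ar C \<and> g \<in> Ar C \<and> Dom C f = Dom C g \<and> Cod C f = Dom C b \<and>
            Cod C g = Dom C c \<and> Comp C b f = Comp C c g \<longrightarrow>
        (\<exists>!u. u \<in> hom C (Dom C g) (Dom C a) \<and> Comp C a u = f \<and> Comp C s u = g))"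

definition terminal :: "('o, 'm) cat \<Rightarrow> 'o \<Rightarrow> bool" where
  "terminal C t \<longleftrightarrow> t \<in> Ob C \<and> (\<forall>x \<in> Ob C. \<exists>!u. u \<in> hom C x t)"

definition has_pullbacks :: "('o, 'm) cat \<Rightarrow> bool" where
  "has_pullbacks C \<longleftrightarrow>
     (\<forall>b c. b \<in> Ar C \<and> c \<in> Ar C \<and> Cod C b = Cod C c \<longrightarrow> (\<exists>a s. is_pullback C a s b c))"

text \<open>Finite limits: a terminal object and all pullbacks (the standard equivalent).\<close>

definition has_finite_limits :: "('o, 'm) cat \<Rightarrow> bool" where
  "has_finite_limits C \<longleftrightarrow> (\<exists>t. terminal C t) \<and> has_pullbacks C"

definition is_coequalizer :: "('o, 'm) cat \<Rightarrow> 'm \<Rightarrow> 'm \<Rightarrow> 'm \<Rightarrow> bool" where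
  "is_coequalizer C f g q \<longleftrightarrow>
     f \<in> Ar C \<and> g \<in> Ar C \<and> q \<in> Ar C \<and> Dom C f = Dom C g \<and> Cod C f = Cod C g \<and>
     Dom C q = Cod C f \<and> Comp C q f = Comp C q g \<and>
     (\<forall>h. h \<in> Ar C \<and> Dom C h = Cod C f \<and> Comp C h f = Comp C h g \<longrightarrow>
        (\<exists>!u. u \<in> hom C (Cod C q) (Cod C h) \<and> Comp C u q = h))"

definition regular_epi :: "('o, 'm) cat \<Rightarrow> 'm \<Rightarrow> bool" where
  "regular_epi C e \<longleftrightarrow> (\<exists>f g. is_coequalizer C f g e)"

text \<open>(p1, p2) is a kernel pair of f iff the square p1, p2, f, f is a pullback.\<close>

definition regular_category :: "('o, 'm) cat \<Rightarrow> bool" where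
  "regular_category C \<longleftrightarrow>
     category C \<and> has_finite_limits C \<and>
     (\<forall>f p1 p2. is_pullback C p1 p2 f f \<longrightarrow> (\<exists>q. is_coequalizer C p1 p2 q)) \<and>
     (\<forall>e f a s. regular_epi C e \<and> is_pullback C a s e f \<longrightarrow> regular_epi C s)"

definition is_product :: "('o, 'm) cat \<Rightarrow> 'i set \<Rightarrow> ('i \<Rightarrow> 'o) \<Rightarrow> 'o \<Rightarrow> ('i \<Rightarrow> 'm) \<Rightarrow> bool" where
  "is_product C I A P p \<longleftrightarrow>
     P \<in> Ob C \<and> (\<forall>i \<in> I. p i \<in> hom C P (A i)) \<and>
     (\<forall>X f. X \<in> Ob C \<and> (\<forall>i \<in> I. f i \<in> hom C X (A i)) \<longrightarrow>
        (\<exists>!u. u \<in> hom C X P \<and> (\<forall>i \<in> I. Comp C (p i) u = f i)))"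

definition same_subobject :: "('o, 'm) cat \<Rightarrow> 'm \<Rightarrow> 'm \<Rightarrow> bool" where
  "same_subobject C m m' \<longleftrightarrow>
     mono C m \<and> mono C m' \<and> Cod C m = Cod C m' \<and>
     (\<exists>u v. u \<in> hom C (Dom C m) (Dom C m') \<and> Comp C m' u = m \<and>
            v \<in> hom C (Dom C m') (Dom C m) \<and> Comp C m v = m')"

definition is_image_factorization :: "('o, 'm) cat \<Rightarrow> 'm \<Rightarrow> 'm \<Rightarrow> 'm \<Rightarrow> bool" where
  "is_image_factorization C f e m \<longleftrightarrow>
     f \<in> Ar C \<and> regular_epi C e \<and> mono C m \<and> Dom C e = Dom C f \<and> Cod C e = Dom C m \<and>
     Cod C m = Cod C f \<and> Comp C m e = f"

text \<open>J-fold subobject decompositions of the product P (projections onto the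
partial products Q j being piI j, i.e. \<pi>_{I_j}): two subobjects s, s' of P with
equal I_j-images for all j are equal.\<close>

definition has_fold_subobject_decompositions ::
  "('o, 'm) cat \<Rightarrow> 'j set \<Rightarrow> 'o \<Rightarrow> ('j \<Rightarrow> 'm) \<Rightarrow> bool" where
  "has_fold_subobject_decompositions C J P piI \<longleftrightarrow>
     (\<forall>s s'. mono C s \<and> Cod C s = P \<and> mono C s' \<and> Cod C s' = P \<and>
        (\<forall>j \<in> J. \<forall>e m e' m'.
            is_image_factorization C (Comp C (piI j) s) e m \<and>
            is_image_factorization C (Comp C (piI j) s') e' m' \<longrightarrow> same_subobject C m m')
        \<longrightarrow> same_subobject C s s')"

end

theory Submission
  imports Defs
begin

lemma ex1_uniq: "\<exists>!x. P x \<Longrightarrow> P a \<Longrightarrow> P b \<Longrightarrow> a = b" by blast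

lemma cat_comp:
  assumes "category C" "f \<in> Ar C" "g \<in> Ar C" "Dom C g = Cod C f"
  shows "Comp C g f \<in> Ar C \<and> Dom C (Comp C g f) = Dom C f \<and> Cod C (Comp C g f) = Cod C g"
proof -
  have "f \<in> hom C (Dom C f) (Cod C f)" "g \<in> hom C (Cod C f) (Cod C g)"
    using assms by (auto simp: hom_def)
  then have "Comp C g f \<in> hom C (Dom C f) (Cod C g)"
    using assms(1) unfolding category_def by blast
  then show ?thesis by (simp add: hom_def)
qed

lemma cat_assoc:
  assumes "category C" "f \<in> Ar C" "g \<in> Ar C" "h \<in> Ar C" "Dom C g = Cod C f" "Dom C h = Cod C g"
  shows "Comp C h (Comp C g f) = Comp C (Comp C h g) f"
proof -
  have "f \<in> hom C (Dom C f) (Cod C f)" "g \<in> hom C (Cod C f) (Cod C g)" "h \<in> hom C (Cod C g) (Cod C h)"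
    using assms by (auto simp: hom_def)
  then show ?thesis using assms(1) unfolding category_def by blast
qed

lemma cat_ob:
  assumes "category C" "f \<in> Ar C"
  shows "Dom C f \<in> Ob C" "Cod C f \<in> Ob C"
  using assms unfolding category_def by auto

lemma mono_cancel:
  assumes "mono C m" "f \<in> Ar C" "g \<in> Ar C" "Dom C f = Dom C g" "Cod C f = Dom C m"
    "Cod C g = Dom C m" "Comp C m f = Comp C m g"
  shows "f = g"
  using assms unfolding mono_def by blast

lemma prod_univ:
  assumes "is_product C I A P p" "X \<in> Ob C" "\<forall>i\<in>I. f i \<in> hom C X (A i)"
  shows "\<exists>!u. u \<in> hom C X P \<and> (\<forall>i\<in>I. Comp C (p i) u = f i)"
proof -
  have H: "\<forall>X f. X \<in> Ob C \<and> (\<forall>i \<in> I. f i \<in> hom C X (A i)) \<longrightarrow>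
        (\<exists>!u. u \<in> hom C X P \<and> (\<forall>i \<in> I. Comp C (p i) u = f i))"
    using assms(1) unfolding is_product_def by (elim conjE)
  show ?thesis using H[rule_format, OF conjI[OF assms(2) assms(3)]] .
qed

lemma prod_uniq:
  assumes "category C" "is_product C I A P p" "u \<in> Ar C" "v \<in> Ar C"
    "Dom C u = Dom C v" "Cod C u = P" "Cod C v = P"
    "\<forall>i \<in> I. Comp C (p i) u = Comp C (p i) v"
  shows "u = v"
proof -
  let ?X = "Dom C u"
  have X: "?X \<in> Ob C" using cat_ob(1)[OF assms(1,3)] .
  have ch: "Comp C (p i) u \<in> hom C ?X (A i)" if i: "i \<in> I" for i
  proof -
    have "p i \<in> Ar C" "Dom C (p i) = P" "Cod C (p i) = A i"
      using assms(2) i unfolding is_product_def hom_def by auto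
    then show ?thesis using cat_comp[OF assms(1) assms(3), of "p i"] assms(6) unfolding hom_def by simp
  qed
  have ex: "\<exists>!w. w \<in> hom C ?X P \<and> (\<forall>i \<in> I. Comp C (p i) w = Comp C (p i) u)"
    by (rule prod_univ[OF assms(2) X]) (use ch in blast)
  have "u \<in> hom C ?X P" "v \<in> hom C ?X P" using assms(3-7) unfolding hom_def by auto
  then show ?thesis using assms(8) ex1_uniq[OF ex] by simp
qed

lemma prod_ex:
  assumes "is_product C I A P p" "X \<in> Ob C" "\<forall>i \<in> I. f i \<in> hom C X (A i)"
  shows "\<exists>u. u \<in> Ar C \<and> Dom C u = X \<and> Cod C u = P \<and> (\<forall>i \<in> I. Comp C (p i) u = f i)"
  using assms unfolding is_product_def hom_def by blast

lemma prod_proj: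
  assumes "is_product C I A P p" "i \<in> I"
  shows "p i \<in> Ar C" "Dom C (p i) = P" "Cod C (p i) = A i"
  using assms unfolding is_product_def hom_def by auto

lemma regepi_ar:
  assumes "regular_epi C e" shows "e \<in> Ar C"
  using assms unfolding regular_epi_def is_coequalizer_def by blast

lemma coeq_univ:
  assumes "is_coequalizer C f g q" "h \<in> Ar C" "Dom C h = Cod C f" "Comp C h f = Comp C h g"
  shows "\<exists>!u. u \<in> hom C (Cod C q) (Cod C h) \<and> Comp C u q = h"
proof -
  have H: "\<forall>h. h \<in> Ar C \<and> Dom C h = Cod C f \<and> Comp C h f = Comp C h g \<longrightarrow>
        (\<exists>!u. u \<in> hom C (Cod C q) (Cod C h) \<and> Comp C u q = h)"
    using assms(1) unfolding is_coequalizer_def by (elim conjE)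
  show ?thesis using H assms(2-4) by blast
qed

lemma regepi_epi:
  assumes "category C" "regular_epi C e" "x \<in> Ar C" "y \<in> Ar C" "Dom C x = Cod C e"
    "Dom C y = Cod C e" "Cod C x = Cod C y" "Comp C x e = Comp C y e"
  shows "x = y"
proof -
  obtain f g where co: "is_coequalizer C f g e" using assms(2) unfolding regular_epi_def by blast
  let ?h = "Comp C x e"
  have e: "e \<in> Ar C" "Dom C e = Cod C f" using co unfolding is_coequalizer_def by auto
  have h: "?h \<in> Ar C" "Dom C ?h = Dom C e" "Cod C ?h = Cod C x"
    using cat_comp[OF assms(1) e(1) assms(3)] assms(5) by auto
  have ff: "f \<in> Ar C" "g \<in> Ar C" "Cod C g = Cod C f" "Comp C e f = Comp C e g"
    using co unfolding is_coequalizer_def by auto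
  have hfg: "Comp C ?h f = Comp C ?h g"
    using cat_assoc[OF assms(1) ff(1) e(1) assms(3)] cat_assoc[OF assms(1) ff(2) e(1) assms(3)]
      ff e assms(5) by simp
  have ex: "\<exists>!u. u \<in> hom C (Cod C e) (Cod C ?h) \<and> Comp C u e = ?h"
    by (rule coeq_univ[OF co h(1)]) (use h e hfg in auto)
  have "x \<in> hom C (Cod C e) (Cod C ?h)" "y \<in> hom C (Cod C e) (Cod C ?h)"
    using assms h unfolding hom_def by auto
  then show ?thesis using ex1_uniq[OF ex] assms(8) by simp
qed


lemma comp_simps:
  assumes "category C" "f \<in> Ar C" "g \<in> Ar C" "Dom C g = Cod C f"
  shows "Comp C g f \<in> Ar C" "Dom C (Comp C g f) = Dom C f" "Cod C (Comp C g f) = Cod C g"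
  using cat_comp[OF assms] by auto

lemma pb_D:
  assumes "is_pullback C a s b c"
  shows "a \<in> Ar C" "s \<in> Ar C" "b \<in> Ar C" "c \<in> Ar C" "Dom C a = Dom C s" "Cod C a = Dom C b"
    "Cod C s = Dom C c" "Cod C b = Cod C c" "Comp C b a = Comp C c s"
  using assms unfolding is_pullback_def by auto

lemma pb_univ:
  assumes "is_pullback C a s b c" "f \<in> Ar C" "g \<in> Ar C" "Dom C f = Dom C g" "Cod C f = Dom C b"
    "Cod C g = Dom C c" "Comp C b f = Comp C c g"
  shows "\<exists>!u. u \<in> hom C (Dom C g) (Dom C a) \<and> Comp C a u = f \<and> Comp C s u = g"
proof -
  have H: "\<forall>f g. f \<in> Ar C \<and> g \<in> Ar C \<and> Dom C f = Dom C g \<and> Cod C f = Dom C b \<and>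
            Cod C g = Dom C c \<and> Comp C b f = Comp C c g \<longrightarrow>
        (\<exists>!u. u \<in> hom C (Dom C g) (Dom C a) \<and> Comp C a u = f \<and> Comp C s u = g)"
    using assms(1) unfolding is_pullback_def by (elim conjE)
  show ?thesis using H assms(2-7) by blast
qed

lemma pb_ex:
  assumes "is_pullback C a s b c" "f \<in> Ar C" "g \<in> Ar C" "Dom C f = Dom C g" "Cod C f = Dom C b"
    "Cod C g = Dom C c" "Comp C b f = Comp C c g"
  obtains u where "u \<in> Ar C" "Dom C u = Dom C g" "Cod C u = Dom C a" "Comp C a u = f" "Comp C s u = g"
  using pb_univ[OF assms] unfolding hom_def by blast

lemma pb_mono:
  assumes "category C" "is_pullback C a s b c" "mono C b"
  shows "mono C s"
  unfolding mono_def
proof (intro conjI allI impI)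
  note P = pb_D[OF assms(2)]
  show "s \<in> Ar C" by (rule P(2))
  fix f g assume H: "f \<in> Ar C \<and> g \<in> Ar C \<and> Dom C f = Dom C g \<and> Cod C f = Dom C s \<and>
           Cod C g = Dom C s \<and> Comp C s f = Comp C s g"
  have "Comp C b (Comp C a f) = Comp C c (Comp C s f)"
    using cat_assoc[OF assms(1), of f a b] cat_assoc[OF assms(1), of f s c] P H by simp
  also have "\<dots> = Comp C c (Comp C s g)" using H by simp
  also have "\<dots> = Comp C b (Comp C a g)"
    using cat_assoc[OF assms(1), of g a b] cat_assoc[OF assms(1), of g s c] P H by simp
  finally have "Comp C a f = Comp C a g"
    using mono_cancel[OF assms(3)] comp_simps[OF assms(1)] P H by simp
  then have ac: "Comp C a f = Comp C a g" .
  have ex: "\<exists>!u. u \<in> hom C (Dom C (Comp C s f)) (Dom C a) \<and> Comp C a u = Comp C a f \<and> Comp C s u = Comp C s f"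
    by (rule pb_univ[OF assms(2)]) (use comp_simps[OF assms(1)] P H cat_assoc[OF assms(1), of f a b] cat_assoc[OF assms(1), of f s c] in auto)
  show "f = g"
    by (rule ex1_uniq[OF ex]) (use H P ac comp_simps[OF assms(1)] in \<open>auto simp: hom_def\<close>)
qed

lemma diag:
  assumes "category C" "regular_epi C e" "mono C n" "m \<in> Ar C" "h \<in> Ar C"
    "Dom C m = Cod C e" "Dom C h = Dom C e" "Cod C h = Dom C n" "Cod C m = Cod C n"
    "Comp C m e = Comp C n h"
  shows "\<exists>d. d \<in> Ar C \<and> Dom C d = Dom C m \<and> Cod C d = Dom C n \<and> Comp C n d = m"
proof -
  obtain x y where co: "is_coequalizer C x y e" using assms(2) unfolding regular_epi_def by blast
  have X: "x \<in> Ar C" "y \<in> Ar C" "e \<in> Ar C" "Cod C x = Dom C e" "Cod C y = Dom C e" "Dom C x = Dom C y"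
     "Comp C e x = Comp C e y"
    using co unfolding is_coequalizer_def by auto
  have n: "n \<in> Ar C" using assms(3) unfolding mono_def by blast
  have "Comp C n (Comp C h x) = Comp C (Comp C n h) x" using cat_assoc[OF assms(1), of x h n] X n assms by simp
  also have "\<dots> = Comp C (Comp C m e) x" using assms by simp
  also have "\<dots> = Comp C m (Comp C e x)" using cat_assoc[OF assms(1), of x e m] X assms by simp
  also have "\<dots> = Comp C m (Comp C e y)" using X by simp
  also have "\<dots> = Comp C (Comp C m e) y" using cat_assoc[OF assms(1), of y e m] X assms by simp
  also have "\<dots> = Comp C (Comp C n h) y" using assms by simp
  also have "\<dots> = Comp C n (Comp C h y)" using cat_assoc[OF assms(1), of y h n] X n assms by simp
  finally have hxy: "Comp C h x = Comp C h y"
    using mono_cancel[OF assms(3)] comp_simps[OF assms(1)] X assms by simp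
  have "\<exists>!d. d \<in> hom C (Cod C e) (Cod C h) \<and> Comp C d e = h"
    by (rule coeq_univ[OF co assms(5)]) (use hxy X assms in auto)
  then obtain d where d: "d \<in> Ar C" "Dom C d = Cod C e" "Cod C d = Cod C h" "Comp C d e = h"
    unfolding hom_def by blast
  have nd: "Comp C n d \<in> Ar C" "Dom C (Comp C n d) = Cod C e" "Cod C (Comp C n d) = Cod C n"
    using comp_simps[OF assms(1) d(1) n] d assms by auto
  have "Comp C (Comp C n d) e = Comp C n (Comp C d e)" using cat_assoc[OF assms(1), of e d n] X d n assms by simp
  also have "\<dots> = Comp C m e" using d assms by simp
  finally have "Comp C n d = m"
    using regepi_epi[OF assms(1,2) nd(1) assms(4)] nd assms by simp
  then show ?thesis using d nd assms by auto
qed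


lemma reg_D:
  assumes "regular_category C"
  shows "category C"
    "\<And>b c. b \<in> Ar C \<Longrightarrow> c \<in> Ar C \<Longrightarrow> Cod C b = Cod C c \<Longrightarrow> \<exists>a s. is_pullback C a s b c"
    "\<And>f p1 p2. is_pullback C p1 p2 f f \<Longrightarrow> \<exists>q. is_coequalizer C p1 p2 q"
    "\<And>e f a s. regular_epi C e \<Longrightarrow> is_pullback C a s e f \<Longrightarrow> regular_epi C s"
  using assms unfolding regular_category_def has_finite_limits_def has_pullbacks_def by blast+

lemma image_ex:
  assumes reg: "regular_category C" and f: "f \<in> Ar C"
  shows "\<exists>e m. is_image_factorization C f e m"
proof -
  have cat: "category C" by (rule reg_D(1)[OF reg])
  note S = comp_simps[OF cat]
  note As = cat_assoc[OF cat]
  define X where "X = Dom C f"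
  define Y where "Y = Cod C f"
  have F: "Dom C f = X" "Cod C f = Y" using X_def Y_def by auto
  obtain k1 k2 where K: "is_pullback C k1 k2 f f" using reg_D(2)[OF reg f f] by blast
  define Ko where "Ko = Dom C k1"
  have KD: "k1 \<in> Ar C" "k2 \<in> Ar C" "Dom C k1 = Ko" "Dom C k2 = Ko" "Cod C k1 = X" "Cod C k2 = X"
     "Comp C f k1 = Comp C f k2"
    using pb_D(1,2,5,6,7,9)[OF K] unfolding Ko_def X_def by (simp_all only:)
  obtain q where co: "is_coequalizer C k1 k2 q" using reg_D(3)[OF reg K] by blast
  define Qo where "Qo = Cod C q"
  have Q: "q \<in> Ar C" "Dom C q = X" "Cod C q = Qo" "Comp C q k1 = Comp C q k2"
    using co KD unfolding Qo_def is_coequalizer_def by auto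
  have rq: "regular_epi C q" using co unfolding regular_epi_def by blast
  have "\<exists>!m. m \<in> hom C (Cod C q) (Cod C f) \<and> Comp C m q = f"
    by (rule coeq_univ[OF co f]) (use KD F in auto)
  then obtain m where M: "m \<in> Ar C" "Dom C m = Qo" "Cod C m = Y" "Comp C m q = f"
    unfolding hom_def using Q F by blast
  have "mono C m"
    unfolding mono_def
  proof (intro conjI allI impI)
    show "m \<in> Ar C" by (rule M(1))
    fix u v assume H: "u \<in> Ar C \<and> v \<in> Ar C \<and> Dom C u = Dom C v \<and> Cod C u = Dom C m \<and>
           Cod C v = Dom C m \<and> Comp C m u = Comp C m v"
    define Z where "Z = Dom C u"
    have U: "u \<in> Ar C" "v \<in> Ar C" "Dom C u = Z" "Dom C v = Z" "Cod C u = Qo" "Cod C v = Qo"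
      "Comp C m u = Comp C m v" using M H Z_def by auto
    obtain x1 y1 where P1: "is_pullback C x1 y1 q u" using reg_D(2)[OF reg Q(1) U(1)] U Q by auto
    define Fo where "Fo = Dom C x1"
    have P1D: "x1 \<in> Ar C" "y1 \<in> Ar C" "Dom C x1 = Fo" "Dom C y1 = Fo" "Cod C x1 = X" "Cod C y1 = Z"
      "Comp C q x1 = Comp C u y1"
      using pb_D[OF P1] Fo_def Q U by auto
    have ry1: "regular_epi C y1" by (rule reg_D(4)[OF reg rq P1])
    have vy: "Comp C v y1 \<in> Ar C" "Dom C (Comp C v y1) = Fo" "Cod C (Comp C v y1) = Qo"
      using S[of y1 v] P1D U by auto
    obtain x2 y2 where P2: "is_pullback C x2 y2 q (Comp C v y1)" using reg_D(2)[OF reg Q(1) vy(1)] vy Q by auto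
    define Go where "Go = Dom C x2"
    have P2D: "x2 \<in> Ar C" "y2 \<in> Ar C" "Dom C x2 = Go" "Dom C y2 = Go" "Cod C x2 = X" "Cod C y2 = Fo"
      "Comp C q x2 = Comp C (Comp C v y1) y2"
      using pb_D[OF P2] Go_def Q vy by auto
    have ry2: "regular_epi C y2" by (rule reg_D(4)[OF reg rq P2])
    note D = U(1-6) P1D(1-6) P2D(1-6) Q(1-3) KD(1-6) M(1-3) F f
    have "Comp C f (Comp C x1 y2) = Comp C (Comp C m q) (Comp C x1 y2)" using M by simp
    also have "\<dots> = Comp C m (Comp C (Comp C q x1) y2)" using D by (simp add: As S)
    also have "\<dots> = Comp C m (Comp C (Comp C u y1) y2)" using P1D by simp
    also have "\<dots> = Comp C (Comp C m u) (Comp C y1 y2)" using D by (simp add: As S)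
    also have "\<dots> = Comp C (Comp C m v) (Comp C y1 y2)" using U by simp
    also have "\<dots> = Comp C m (Comp C (Comp C v y1) y2)" using D by (simp add: As S)
    also have "\<dots> = Comp C m (Comp C q x2)" using P2D by simp
    also have "\<dots> = Comp C (Comp C m q) x2" using D by (simp add: As S)
    also have "\<dots> = Comp C f x2" using M by simp
    finally have fx: "Comp C f (Comp C x1 y2) = Comp C f x2" .
    obtain z where Z: "z \<in> Ar C" "Dom C z = Dom C x2" "Cod C z = Dom C k1" "Comp C k1 z = Comp C x1 y2" "Comp C k2 z = x2"
      by (rule pb_ex[OF K, of "Comp C x1 y2" x2]) (use D fx in \<open>simp_all add: S\<close>)
    have Zd: "Dom C z = Go" "Cod C z = Ko"
      using Z(2,3) P2D(3) KD(3) by simp_all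
    have "Comp C (Comp C u y1) y2 = Comp C (Comp C q x1) y2" using P1D by simp
    also have "\<dots> = Comp C q (Comp C x1 y2)" using D by (simp add: As S)
    also have "\<dots> = Comp C q (Comp C k1 z)" using Z(4) by simp
    also have "\<dots> = Comp C (Comp C q k1) z" using D Z(1) Zd by (simp add: As S)
    also have "\<dots> = Comp C (Comp C q k2) z" using Q by simp
    also have "\<dots> = Comp C q (Comp C k2 z)" using D Z(1) Zd by (simp add: As S)
    also have "\<dots> = Comp C (Comp C v y1) y2" using Z(5) P2D by simp
    finally have e2: "Comp C (Comp C u y1) y2 = Comp C (Comp C v y1) y2" .
    have e1: "Comp C u y1 = Comp C v y1"
      by (rule regepi_epi[OF cat ry2]) (use D e2 in \<open>simp_all add: S\<close>)
    show "u = v"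
      by (rule regepi_epi[OF cat ry1]) (use D e1 in \<open>simp_all add: S\<close>)
  qed
  then show ?thesis using M rq f Q F unfolding is_image_factorization_def by auto
qed


definition sle :: "('o, 'm) cat \<Rightarrow> 'm \<Rightarrow> 'm \<Rightarrow> bool" where
  "sle C m n \<longleftrightarrow> (\<exists>d. d \<in> Ar C \<and> Dom C d = Dom C m \<and> Cod C d = Dom C n \<and> Comp C n d = m)"

lemma sle_trans:
  assumes cat: "category C" and "sle C m n" "sle C n k" "n \<in> Ar C" "k \<in> Ar C"
  shows "sle C m k"
proof -
  obtain d1 where d1: "d1 \<in> Ar C" "Dom C d1 = Dom C m" "Cod C d1 = Dom C n" "Comp C n d1 = m"
    using assms(2) unfolding sle_def by blast
  obtain d2 where d2: "d2 \<in> Ar C" "Dom C d2 = Dom C n" "Cod C d2 = Dom C k" "Comp C k d2 = n"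
    using assms(3) unfolding sle_def by blast
  have "Comp C k (Comp C d2 d1) = Comp C (Comp C k d2) d1"
    using cat_assoc[OF cat d1(1) d2(1) assms(5)] d1 d2 by simp
  then show ?thesis unfolding sle_def using comp_simps[OF cat d1(1) d2(1)] d1 d2
    by (intro exI[of _ "Comp C d2 d1"]) auto
qed

lemma same_iff:
  "same_subobject C m n \<longleftrightarrow> mono C m \<and> mono C n \<and> Cod C m = Cod C n \<and> sle C m n \<and> sle C n m"
  unfolding same_subobject_def sle_def hom_def by auto

lemma diag_sle:
  assumes "category C" "regular_epi C e" "mono C n" "m \<in> Ar C" "h \<in> Ar C"
    "Dom C m = Cod C e" "Dom C h = Dom C e" "Cod C h = Dom C n" "Cod C m = Cod C n"
    "Comp C m e = Comp C n h"
  shows "sle C m n"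
  using diag[OF assms] unfolding sle_def by blast

lemma mono_ar: "mono C m \<Longrightarrow> m \<in> Ar C" unfolding mono_def by blast

lemma isf_D:
  assumes "category C" "is_image_factorization C f e m"
  shows "f \<in> Ar C" "regular_epi C e" "mono C m" "e \<in> Ar C" "m \<in> Ar C" "Dom C e = Dom C f"
    "Cod C e = Dom C m" "Cod C m = Cod C f" "Comp C m e = f"
proof -
  have H: "f \<in> Ar C" "regular_epi C e" "mono C m" "Dom C e = Dom C f"
    "Cod C e = Dom C m" "Cod C m = Cod C f" "Comp C m e = f"
    using assms(2) unfolding is_image_factorization_def by auto
  show "f \<in> Ar C" "regular_epi C e" "mono C m" "e \<in> Ar C" "m \<in> Ar C" "Dom C e = Dom C f"
    "Cod C e = Dom C m" "Cod C m = Cod C f" "Comp C m e = f"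
    using H regepi_ar[OF H(2)] mono_ar[OF H(3)] by auto
qed


lemma dir1:
  assumes reg: "regular_category C"
    and prodR: "is_product C J Q R r"
    and piI: "\<forall>j \<in> J. piI j \<in> hom C P (Q j)"
    and dec: "has_fold_subobject_decompositions C J P piI"
    and sm: "mono C s" and sP: "Cod C s = P"
    and fe: "\<forall>j \<in> J. is_image_factorization C (Comp C (piI j) s) (e j) (m j)"
    and pT: "is_product C J (\<lambda>j. Dom C (m j)) T t"
    and a: "a \<in> hom C (Dom C s) T" "\<forall>j \<in> J. Comp C (t j) a = e j"
    and b: "b \<in> hom C T R" "\<forall>j \<in> J. Comp C (r j) b = Comp C (m j) (t j)"
    and c: "c \<in> hom C P R" "\<forall>j \<in> J. Comp C (r j) c = piI j"
  shows "is_pullback C a s b c"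
proof -
  have cat: "category C" by (rule reg_D(1)[OF reg])
  note S = comp_simps[OF cat]
  note As = cat_assoc[OF cat]
  define So where "So = Dom C s"
  have s: "s \<in> Ar C" "Dom C s = So" "Cod C s = P" using mono_ar[OF sm] sP So_def by auto
  have A: "a \<in> Ar C" "Dom C a = So" "Cod C a = T" using a(1) So_def unfolding hom_def by auto
  have B: "b \<in> Ar C" "Dom C b = T" "Cod C b = R" using b(1) unfolding hom_def by auto
  have Cc: "c \<in> Ar C" "Dom C c = P" "Cod C c = R" using c(1) unfolding hom_def by auto
  have PI: "piI j \<in> Ar C" "Dom C (piI j) = P" "Cod C (piI j) = Q j" if "j \<in> J" for j
    using piI that unfolding hom_def by auto
  have RJ: "r j \<in> Ar C" "Dom C (r j) = R" "Cod C (r j) = Q j" if "j \<in> J" for j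
    using prod_proj[OF prodR that] by auto
  have TJ: "t j \<in> Ar C" "Dom C (t j) = T" "Cod C (t j) = Dom C (m j)" if "j \<in> J" for j
    using prod_proj[OF pT that] by auto
  have FJ: "regular_epi C (e j)" "mono C (m j)" "e j \<in> Ar C" "m j \<in> Ar C" "Dom C (e j) = So"
    "Cod C (e j) = Dom C (m j)" "Cod C (m j) = Q j" "Comp C (m j) (e j) = Comp C (piI j) s"
    if "j \<in> J" for j
    using isf_D[OF cat fe[rule_format, OF that]] S[OF s(1) PI(1)[OF that]] s PI[OF that] by auto
  have bmono: "mono C b"
    unfolding mono_def
  proof (intro conjI allI impI)
    show "b \<in> Ar C" by (rule B(1))
    fix f g assume H: "f \<in> Ar C \<and> g \<in> Ar C \<and> Dom C f = Dom C g \<and> Cod C f = Dom C b \<and>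
           Cod C g = Dom C b \<and> Comp C b f = Comp C b g"
    have H0: "f \<in> Ar C" "g \<in> Ar C" "Dom C g = Dom C f" "Cod C f = T" "Cod C g = T" using H B by auto
    have "Comp C (t j) f = Comp C (t j) g" if j: "j \<in> J" for j
    proof -
      have "Comp C (m j) (Comp C (t j) f) = Comp C (Comp C (r j) b) f"
        using H0 B TJ[OF j] FJ[OF j] RJ[OF j] b(2) j by (simp add: As S)
      also have "\<dots> = Comp C (r j) (Comp C b f)" using H0 B RJ[OF j] by (simp add: As S)
      also have "\<dots> = Comp C (r j) (Comp C b g)" using H by simp
      also have "\<dots> = Comp C (Comp C (r j) b) g" using H0 B RJ[OF j] by (simp add: As S)
      also have "\<dots> = Comp C (m j) (Comp C (t j) g)"
        using H0 B TJ[OF j] FJ[OF j] RJ[OF j] b(2) j by (simp add: As S)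
      finally have eq: "Comp C (m j) (Comp C (t j) f) = Comp C (m j) (Comp C (t j) g)" .
      show ?thesis
        by (rule mono_cancel[OF FJ(2)[OF j]]) (use eq H0 B TJ[OF j] in \<open>simp_all add: S\<close>)
    qed
    then show "f = g"
      by (intro prod_uniq[OF cat pT]) (use H B in auto)
  qed
  have comm: "Comp C b a = Comp C c s"
  proof (rule prod_uniq[OF cat prodR])
    show "\<forall>j\<in>J. Comp C (r j) (Comp C b a) = Comp C (r j) (Comp C c s)"
    proof
      fix j assume j: "j \<in> J"
      have "Comp C (r j) (Comp C b a) = Comp C (Comp C (m j) (t j)) a"
        using A B RJ[OF j] b(2) j by (simp add: As S)
      also have "\<dots> = Comp C (m j) (Comp C (t j) a)" using A TJ[OF j] FJ(1-7)[OF j] by (simp add: As S)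
      also have "\<dots> = Comp C (m j) (e j)" using a(2) j by simp
      also have "\<dots> = Comp C (r j) (Comp C c s)" using s Cc RJ[OF j] FJ[OF j] c(2) j by (simp add: As S)
      finally show "Comp C (r j) (Comp C b a) = Comp C (r j) (Comp C c s)" .
    qed
  qed (use A B Cc s in \<open>simp_all add: S\<close>)
  obtain a' s' where P1: "is_pullback C a' s' b c" using reg_D(2)[OF reg B(1) Cc(1)] B Cc by auto
  define S' where "S' = Dom C s'"
  have P1D: "a' \<in> Ar C" "s' \<in> Ar C" "Dom C a' = S'" "Dom C s' = S'" "Cod C a' = T" "Cod C s' = P"
    "Comp C b a' = Comp C c s'"
    using pb_D[OF P1] B Cc unfolding S'_def by auto
  have s'm: "mono C s'" by (rule pb_mono[OF cat P1 bmono])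
  obtain u where U: "u \<in> Ar C" "Dom C u = Dom C s" "Cod C u = Dom C a'" "Comp C a' u = a" "Comp C s' u = s"
    by (rule pb_ex[OF P1 A(1) s(1)]) (use A s B Cc comm in auto)
  have U': "Dom C u = So" "Cod C u = S'" using U(2,3) s P1D by auto
  have "same_subobject C s s'"
  proof -
    have H: "\<forall>s s'. mono C s \<and> Cod C s = P \<and> mono C s' \<and> Cod C s' = P \<and>
        (\<forall>j \<in> J. \<forall>e m e' m'.
            is_image_factorization C (Comp C (piI j) s) e m \<and>
            is_image_factorization C (Comp C (piI j) s') e' m' \<longrightarrow> same_subobject C m m')
        \<longrightarrow> same_subobject C s s'"
      using dec unfolding has_fold_subobject_decompositions_def .
    have "same_subobject C m1 m2"
      if j: "j \<in> J" and f1: "is_image_factorization C (Comp C (piI j) s) e1 m1"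
        and f2: "is_image_factorization C (Comp C (piI j) s') e2 m2" for j e1 m1 e2 m2
    proof -
      note F1 = isf_D[OF cat f1] and F2 = isf_D[OF cat f2]
      note D = s P1D(1-6) U(1) U' PI[OF j] RJ[OF j] TJ[OF j] FJ(1-7)[OF j] Cc B A
      have F1': "Dom C e1 = So" "Cod C m1 = Q j" using F1 D by (simp_all add: S)
      have F2': "Dom C e2 = S'" "Cod C m2 = Q j" using F2 D by (simp_all add: S)
      have "Comp C m1 e1 = Comp C (piI j) (Comp C s' u)" using F1 U by simp
      also have "\<dots> = Comp C (Comp C m2 e2) u" using F2 D by (simp add: As S)
      also have "\<dots> = Comp C m2 (Comp C e2 u)" using F2 F2' D by (simp add: As S)
      finally have eq: "Comp C m1 e1 = Comp C m2 (Comp C e2 u)" .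
      have "sle C m1 m2"
        by (rule diag_sle[OF cat F1(2) F2(3) F1(5)]) (use eq F1 F1' F2 F2' D in \<open>simp_all add: S\<close>)
      moreover have "sle C m2 (m j)"
      proof -
        have "Comp C m2 e2 = Comp C (Comp C (r j) c) s'" using F2 c(2) j by simp
        also have "\<dots> = Comp C (r j) (Comp C c s')" using D by (simp add: As S)
        also have "\<dots> = Comp C (r j) (Comp C b a')" using P1D(7) by simp
        also have "\<dots> = Comp C (Comp C (r j) b) a'" using D by (simp add: As S)
        also have "\<dots> = Comp C (m j) (Comp C (t j) a')" using D b(2) j by (simp add: As S)
        finally have eq: "Comp C m2 e2 = Comp C (m j) (Comp C (t j) a')" .
        show ?thesis
          by (rule diag_sle[OF cat F2(2) FJ(2)[OF j] F2(5)]) (use eq F2 F2' D in \<open>simp_all add: S\<close>)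
      qed
      moreover have "sle C (m j) m1"
        by (rule diag_sle[OF cat FJ(1)[OF j] F1(3) FJ(4)[OF j] F1(4)]) (use F1 F1' D FJ(8)[OF j] in \<open>simp_all add: S\<close>)
      ultimately have "sle C m2 m1" using sle_trans[OF cat] F1 FJ[OF j] by blast
      then show ?thesis unfolding same_iff using \<open>sle C m1 m2\<close> F1 F1' F2 F2' by auto
    qed
    then show ?thesis using H sm s'm s P1D by blast
  qed
  then obtain v where V: "v \<in> Ar C" "Dom C v = S'" "Cod C v = So" "Comp C s v = s'"
    unfolding same_subobject_def hom_def using s P1D by auto
  show ?thesis
    unfolding is_pullback_def
  proof (intro conjI allI impI)
    fix f g assume H: "f \<in> Ar C \<and> g \<in> Ar C \<and> Dom C f = Dom C g \<and> Cod C f = Dom C b \<and>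
            Cod C g = Dom C c \<and> Comp C b f = Comp C c g"
    obtain w where W: "w \<in> Ar C" "Dom C w = Dom C g" "Cod C w = Dom C a'" "Comp C a' w = f" "Comp C s' w = g"
      using pb_ex[OF P1, of f g] H by blast
    have W': "Cod C w = S'" using W P1D by simp
    have sw: "Comp C s (Comp C v w) = g" using W W' V s by (simp add: As S)
    have vw: "Comp C v w \<in> Ar C" "Dom C (Comp C v w) = Dom C g" "Cod C (Comp C v w) = So"
      using W W' V by (simp_all add: S)
    have aw: "Comp C a (Comp C v w) = f"
    proof (rule mono_cancel[OF bmono])
      have "Comp C b (Comp C a (Comp C v w)) = Comp C (Comp C b a) (Comp C v w)"
        using vw A B by (simp add: As S)
      also have "\<dots> = Comp C c (Comp C s (Comp C v w))" using comm vw s Cc by (simp add: As S)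
      also have "\<dots> = Comp C b f" using sw H by simp
      finally show "Comp C b (Comp C a (Comp C v w)) = Comp C b f" .
    qed (use vw A B H in \<open>simp_all add: S\<close>)
    show "\<exists>!u. u \<in> hom C (Dom C g) (Dom C a) \<and> Comp C a u = f \<and> Comp C s u = g"
    proof (rule ex1I[of _ "Comp C v w"])
      show "Comp C v w \<in> hom C (Dom C g) (Dom C a) \<and> Comp C a (Comp C v w) = f \<and> Comp C s (Comp C v w) = g"
        using vw A aw sw unfolding hom_def by auto
    next
      fix y assume Y: "y \<in> hom C (Dom C g) (Dom C a) \<and> Comp C a y = f \<and> Comp C s y = g"
      show "y = Comp C v w"
        by (rule mono_cancel[OF sm]) (use Y vw A s sw in \<open>auto simp: hom_def\<close>)
    qed
  qed (use A B Cc s comm in auto)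
qed


lemma dir2:
  assumes reg: "regular_category C"
    and prodR: "is_product C J Q R r"
    and piI: "\<forall>j \<in> J. piI j \<in> hom C P (Q j)"
    and c: "c \<in> hom C P R" "\<forall>j \<in> J. Comp C (r j) c = piI j"
    and prods_exist: "\<forall>s e m. mono C s \<and> Cod C s = P \<and>
            (\<forall>j \<in> J. is_image_factorization C (Comp C (piI j) s) (e j) (m j)) \<longrightarrow>
            (\<exists>T t. is_product C J (\<lambda>j. Dom C (m j)) T t)"
    and pbk: "\<forall>s e m T t a b c.
       mono C s \<and> Cod C s = P \<and>
       (\<forall>j \<in> J. is_image_factorization C (Comp C (piI j) s) (e j) (m j)) \<and>
       is_product C J (\<lambda>j. Dom C (m j)) T t \<and>
       a \<in> hom C (Dom C s) T \<and> (\<forall>j \<in> J. Comp C (t j) a = e j) \<and>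
       b \<in> hom C T R \<and> (\<forall>j \<in> J. Comp C (r j) b = Comp C (m j) (t j)) \<and>
       c \<in> hom C P R \<and> (\<forall>j \<in> J. Comp C (r j) c = piI j)
       \<longrightarrow> is_pullback C a s b c"
    and sm: "mono C s" "Cod C s = P" and sm': "mono C s'" "Cod C s' = P"
    and cond: "\<forall>j \<in> J. \<forall>e m e' m'.
            is_image_factorization C (Comp C (piI j) s) e m \<and>
            is_image_factorization C (Comp C (piI j) s') e' m' \<longrightarrow> same_subobject C m m'"
  shows "sle C s s'"
proof -
  have cat: "category C" by (rule reg_D(1)[OF reg])
  note S = comp_simps[OF cat]
  note As = cat_assoc[OF cat]
  have s: "s \<in> Ar C" "Cod C s = P" using mono_ar[OF sm(1)] sm(2) by auto
  have s': "s' \<in> Ar C" "Cod C s' = P" using mono_ar[OF sm'(1)] sm'(2) by auto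
  have Cc: "c \<in> Ar C" "Dom C c = P" "Cod C c = R" using c(1) unfolding hom_def by auto
  have PI: "piI j \<in> Ar C" "Dom C (piI j) = P" "Cod C (piI j) = Q j" if "j \<in> J" for j
    using piI that unfolding hom_def by auto
  have RJ: "r j \<in> Ar C" "Dom C (r j) = R" "Cod C (r j) = Q j" if "j \<in> J" for j
    using prod_proj[OF prodR that] by auto
  have "\<forall>j \<in> J. \<exists>p. is_image_factorization C (Comp C (piI j) s) (fst p) (snd p)"
  proof
    fix j assume j: "j \<in> J"
    have "Comp C (piI j) s \<in> Ar C" using S[OF s(1) PI(1)[OF j]] s PI[OF j] by simp
    then obtain e0 m0 where "is_image_factorization C (Comp C (piI j) s) e0 m0"
      using image_ex[OF reg] by blast
    then show "\<exists>p. is_image_factorization C (Comp C (piI j) s) (fst p) (snd p)"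
      by (intro exI[of _ "(e0, m0)"]) simp
  qed
  then have "\<exists>F. \<forall>j \<in> J. is_image_factorization C (Comp C (piI j) s) (fst (F j)) (snd (F j))"
    by (rule bchoice)
  then obtain F where F: "\<forall>j \<in> J. is_image_factorization C (Comp C (piI j) s) (fst (F j)) (snd (F j))"
    by (elim exE)
  define e where "e = (\<lambda>j. fst (F j))"
  define m where "m = (\<lambda>j. snd (F j))"
  have fe: "\<forall>j \<in> J. is_image_factorization C (Comp C (piI j) s) (e j) (m j)"
    using F unfolding e_def m_def by blast
  have "\<forall>j \<in> J. \<exists>p. is_image_factorization C (Comp C (piI j) s') (fst p) (snd p)"
  proof
    fix j assume j: "j \<in> J"
    have "Comp C (piI j) s' \<in> Ar C" using S[OF s'(1) PI(1)[OF j]] s' PI[OF j] by simp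
    then obtain e0 m0 where "is_image_factorization C (Comp C (piI j) s') e0 m0"
      using image_ex[OF reg] by blast
    then show "\<exists>p. is_image_factorization C (Comp C (piI j) s') (fst p) (snd p)"
      by (intro exI[of _ "(e0, m0)"]) simp
  qed
  then have "\<exists>F'. \<forall>j \<in> J. is_image_factorization C (Comp C (piI j) s') (fst (F' j)) (snd (F' j))"
    by (rule bchoice)
  then obtain F' where F': "\<forall>j \<in> J. is_image_factorization C (Comp C (piI j) s') (fst (F' j)) (snd (F' j))"
    by (elim exE)
  define e' where "e' = (\<lambda>j. fst (F' j))"
  define m' where "m' = (\<lambda>j. snd (F' j))"
  have fe': "\<forall>j \<in> J. is_image_factorization C (Comp C (piI j) s') (e' j) (m' j)"
    using F' unfolding e'_def m'_def by blast
  have FJ: "regular_epi C (e j)" "mono C (m j)" "e j \<in> Ar C" "m j \<in> Ar C" "Dom C (e j) = Dom C s"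
    "Cod C (e j) = Dom C (m j)" "Cod C (m j) = Q j" "Comp C (m j) (e j) = Comp C (piI j) s"
    if "j \<in> J" for j
    using isf_D[OF cat fe[rule_format, OF that]] S[OF s(1) PI(1)[OF that]] s PI[OF that] by auto
  have FJ': "regular_epi C (e' j)" "mono C (m' j)" "e' j \<in> Ar C" "m' j \<in> Ar C" "Dom C (e' j) = Dom C s'"
    "Cod C (e' j) = Dom C (m' j)" "Cod C (m' j) = Q j" "Comp C (m' j) (e' j) = Comp C (piI j) s'"
    if "j \<in> J" for j
    using isf_D[OF cat fe'[rule_format, OF that]] S[OF s'(1) PI(1)[OF that]] s' PI[OF that] by auto
  obtain T' t' where pT': "is_product C J (\<lambda>j. Dom C (m' j)) T' t'"
    using prods_exist[rule_format, of s' e' m', OF conjI[OF sm'(1) conjI[OF sm'(2) fe']]] by blast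
  have T'o: "T' \<in> Ob C" using pT' unfolding is_product_def by blast
  have TJ: "t' j \<in> Ar C" "Dom C (t' j) = T'" "Cod C (t' j) = Dom C (m' j)" if "j \<in> J" for j
    using prod_proj[OF pT' that] by auto
  obtain a' where A: "a' \<in> Ar C" "Dom C a' = Dom C s'" "Cod C a' = T'" "\<forall>j \<in> J. Comp C (t' j) a' = e' j"
    using prod_ex[OF pT', of "Dom C s'" e'] cat_ob[OF cat s'(1)] FJ' unfolding hom_def by auto
  obtain b' where B: "b' \<in> Ar C" "Dom C b' = T'" "Cod C b' = R" "\<forall>j \<in> J. Comp C (r j) b' = Comp C (m' j) (t' j)"
    using prod_ex[OF prodR T'o, of "\<lambda>j. Comp C (m' j) (t' j)"] TJ FJ' S unfolding hom_def by auto
  have P1: "is_pullback C a' s' b' c"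
    using pbk[rule_format, of s' e' m' T' t' a' b' c] sm' fe' pT' A B c unfolding hom_def by auto
  have "\<forall>j \<in> J. \<exists>\<phi>. \<phi> \<in> Ar C \<and> Dom C \<phi> = Dom C (m j) \<and> Cod C \<phi> = Dom C (m' j) \<and> Comp C (m' j) \<phi> = m j"
  proof
    fix j assume j: "j \<in> J"
    have "same_subobject C (m j) (m' j)"
      using cond[rule_format, of j "e j" "m j" "e' j" "m' j"] fe j fe' by blast
    then show "\<exists>\<phi>. \<phi> \<in> Ar C \<and> Dom C \<phi> = Dom C (m j) \<and> Cod C \<phi> = Dom C (m' j) \<and> Comp C (m' j) \<phi> = m j"
      unfolding same_subobject_def hom_def by blast
  qed
  then have "\<exists>\<Phi>. \<forall>j \<in> J. \<Phi> j \<in> Ar C \<and> Dom C (\<Phi> j) = Dom C (m j) \<and> Cod C (\<Phi> j) = Dom C (m' j) \<and> Comp C (m' j) (\<Phi> j) = m j"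
    by (rule bchoice)
  then obtain \<Phi> where Ph: "\<forall>j \<in> J. \<Phi> j \<in> Ar C \<and> Dom C (\<Phi> j) = Dom C (m j) \<and> Cod C (\<Phi> j) = Dom C (m' j) \<and> Comp C (m' j) (\<Phi> j) = m j"
    by (elim exE)
  obtain \<psi> where Psi: "\<psi> \<in> Ar C" "Dom C \<psi> = Dom C s" "Cod C \<psi> = T'" "\<forall>j \<in> J. Comp C (t' j) \<psi> = Comp C (\<Phi> j) (e j)"
    using prod_ex[OF pT', of "Dom C s" "\<lambda>j. Comp C (\<Phi> j) (e j)"] cat_ob[OF cat s(1)] FJ Ph S
    unfolding hom_def by auto
  have comm: "Comp C b' \<psi> = Comp C c s"
  proof (rule prod_uniq[OF cat prodR])
    show "\<forall>j\<in>J. Comp C (r j) (Comp C b' \<psi>) = Comp C (r j) (Comp C c s)"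
    proof
      fix j assume j: "j \<in> J"
      have ph: "\<Phi> j \<in> Ar C" "Dom C (\<Phi> j) = Dom C (m j)" "Cod C (\<Phi> j) = Dom C (m' j)" "Comp C (m' j) (\<Phi> j) = m j"
        using Ph j by auto
      have "Comp C (r j) (Comp C b' \<psi>) = Comp C (Comp C (r j) b') \<psi>"
        using Psi(1-3) B(1-3) RJ[OF j] by (simp add: As S)
      also have "\<dots> = Comp C (Comp C (m' j) (t' j)) \<psi>" using B(4) j by simp
      also have "\<dots> = Comp C (m' j) (Comp C (t' j) \<psi>)" using Psi(1-3) TJ[OF j] FJ'(1-7)[OF j] by (simp add: As S)
      also have "\<dots> = Comp C (m' j) (Comp C (\<Phi> j) (e j))" using Psi(4) j by simp
      also have "\<dots> = Comp C (Comp C (m' j) (\<Phi> j)) (e j)" using ph(1-3) FJ(1-7)[OF j] FJ'(1-7)[OF j] by (simp add: As S)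
      also have "\<dots> = Comp C (piI j) s" using ph(4) FJ(8)[OF j] by simp
      also have "\<dots> = Comp C (Comp C (r j) c) s" using c(2) j by simp
      also have "\<dots> = Comp C (r j) (Comp C c s)" using s Cc RJ[OF j] by (simp add: As S)
      finally show "Comp C (r j) (Comp C b' \<psi>) = Comp C (r j) (Comp C c s)" .
    qed
  qed (use Psi B Cc s in \<open>simp_all add: S\<close>)
  obtain u where "u \<in> Ar C" "Dom C u = Dom C s" "Cod C u = Dom C a'" "Comp C a' u = \<psi>" "Comp C s' u = s"
    using pb_ex[OF P1, of \<psi> s] Psi B Cc s comm by auto
  then show ?thesis unfolding sle_def using A by auto
qed

theorem proposition4p3:
  fixes C :: "('o, 'm) cat"
    and I :: "'i set" and J :: "'j set" and Ij :: "'j \<Rightarrow> 'i set"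
    and A :: "'i \<Rightarrow> 'o"
    and P :: 'o and p :: "'i \<Rightarrow> 'm"
    and Q :: "'j \<Rightarrow> 'o" and q :: "'j \<Rightarrow> 'i \<Rightarrow> 'm"
    and R :: 'o and r :: "'j \<Rightarrow> 'm"
    and piI :: "'j \<Rightarrow> 'm"
  assumes reg: "regular_category C"
    and sub: "\<forall>j \<in> J. Ij j \<subseteq> I"
    and objs: "\<forall>i \<in> I. A i \<in> Ob C"
    and prodP: "is_product C I A P p"
    and prodQ: "\<forall>j \<in> J. is_product C (Ij j) A (Q j) (q j)"
    and prodR: "is_product C J Q R r"
    and piI: "\<forall>j \<in> J. piI j \<in> hom C P (Q j) \<and> (\<forall>k \<in> Ij j. Comp C (q j k) (piI j) = p k)"
    and prods_exist: "\<forall>s e m. mono C s \<and> Cod C s = P \<and>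
            (\<forall>j \<in> J. is_image_factorization C (Comp C (piI j) s) (e j) (m j)) \<longrightarrow>
            (\<exists>T t. is_product C J (\<lambda>j. Dom C (m j)) T t)"
  shows "has_fold_subobject_decompositions C J P piI \<longleftrightarrow>
    (\<forall>s e m T t a b c.
       mono C s \<and> Cod C s = P \<and>
       (\<forall>j \<in> J. is_image_factorization C (Comp C (piI j) s) (e j) (m j)) \<and>
       is_product C J (\<lambda>j. Dom C (m j)) T t \<and>
       a \<in> hom C (Dom C s) T \<and> (\<forall>j \<in> J. Comp C (t j) a = e j) \<and>
       b \<in> hom C T R \<and> (\<forall>j \<in> J. Comp C (r j) b = Comp C (m j) (t j)) \<and>
       c \<in> hom C P R \<and> (\<forall>j \<in> J. Comp C (r j) c = piI j)
       \<longrightarrow> is_pullback C a s b c)"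
proof -
  have cat: "category C" by (rule reg_D(1)[OF reg])
  have Po: "P \<in> Ob C" using prodP unfolding is_product_def by blast
  obtain c0 where c0: "c0 \<in> Ar C" "Dom C c0 = P" "Cod C c0 = R" "\<forall>j \<in> J. Comp C (r j) c0 = piI j"
    using prod_ex[OF prodR Po, of piI] piI by auto
  have c0h: "c0 \<in> hom C P R" using c0 unfolding hom_def by auto
  have piI': "\<forall>j \<in> J. piI j \<in> hom C P (Q j)" using piI by blast
  show ?thesis
  proof
    assume dec: "has_fold_subobject_decompositions C J P piI"
    show "\<forall>s e m T t a b c.
       mono C s \<and> Cod C s = P \<and>
       (\<forall>j \<in> J. is_image_factorization C (Comp C (piI j) s) (e j) (m j)) \<and>
       is_product C J (\<lambda>j. Dom C (m j)) T t \<and>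
       a \<in> hom C (Dom C s) T \<and> (\<forall>j \<in> J. Comp C (t j) a = e j) \<and>
       b \<in> hom C T R \<and> (\<forall>j \<in> J. Comp C (r j) b = Comp C (m j) (t j)) \<and>
       c \<in> hom C P R \<and> (\<forall>j \<in> J. Comp C (r j) c = piI j)
       \<longrightarrow> is_pullback C a s b c"
    proof (intro allI impI)
      fix s e m T t a b c
      assume H: "mono C s \<and> Cod C s = P \<and>
       (\<forall>j \<in> J. is_image_factorization C (Comp C (piI j) s) (e j) (m j)) \<and>
       is_product C J (\<lambda>j. Dom C (m j)) T t \<and>
       a \<in> hom C (Dom C s) T \<and> (\<forall>j \<in> J. Comp C (t j) a = e j) \<and>
       b \<in> hom C T R \<and> (\<forall>j \<in> J. Comp C (r j) b = Comp C (m j) (t j)) \<and>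
       c \<in> hom C P R \<and> (\<forall>j \<in> J. Comp C (r j) c = piI j)"
      show "is_pullback C a s b c"
        using dir1[OF reg prodR piI' dec, of s e m T t a b c] H by blast
    qed
  next
    assume pbk: "\<forall>s e m T t a b c.
       mono C s \<and> Cod C s = P \<and>
       (\<forall>j \<in> J. is_image_factorization C (Comp C (piI j) s) (e j) (m j)) \<and>
       is_product C J (\<lambda>j. Dom C (m j)) T t \<and>
       a \<in> hom C (Dom C s) T \<and> (\<forall>j \<in> J. Comp C (t j) a = e j) \<and>
       b \<in> hom C T R \<and> (\<forall>j \<in> J. Comp C (r j) b = Comp C (m j) (t j)) \<and>
       c \<in> hom C P R \<and> (\<forall>j \<in> J. Comp C (r j) c = piI j)
       \<longrightarrow> is_pullback C a s b c"
    show "has_fold_subobject_decompositions C J P piI"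
      unfolding has_fold_subobject_decompositions_def
    proof (intro allI impI)
      fix s s'
      assume H: "mono C s \<and> Cod C s = P \<and> mono C s' \<and> Cod C s' = P \<and>
        (\<forall>j \<in> J. \<forall>e m e' m'.
            is_image_factorization C (Comp C (piI j) s) e m \<and>
            is_image_factorization C (Comp C (piI j) s') e' m' \<longrightarrow> same_subobject C m m')"
      then have cond: "\<forall>j \<in> J. \<forall>e m e' m'.
            is_image_factorization C (Comp C (piI j) s) e m \<and>
            is_image_factorization C (Comp C (piI j) s') e' m' \<longrightarrow> same_subobject C m m'"
        by blast
      have cond': "\<forall>j \<in> J. \<forall>e m e' m'.
            is_image_factorization C (Comp C (piI j) s') e m \<and>
            is_image_factorization C (Comp C (piI j) s) e' m' \<longrightarrow> same_subobject C m m'"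
      proof (intro ballI allI impI)
        fix j e m e' m'
        assume j: "j \<in> J" and f: "is_image_factorization C (Comp C (piI j) s') e m \<and>
            is_image_factorization C (Comp C (piI j) s) e' m'"
        have "same_subobject C m' m" using cond j f by blast
        then show "same_subobject C m m'" unfolding same_iff by auto
      qed
      have m: "mono C s" "Cod C s = P" "mono C s'" "Cod C s' = P" using H by auto
      have "sle C s s'"
        by (rule dir2[OF reg prodR piI' c0h c0(4) prods_exist pbk m(1,2) m(3,4) cond])
      moreover have "sle C s' s"
        by (rule dir2[OF reg prodR piI' c0h c0(4) prods_exist pbk m(3,4) m(1,2) cond'])
      ultimately show "same_subobject C s s'" unfolding same_iff using m by auto
    qed
  qed
qed

end
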